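(* Let $Q$ be a set and $(F_i)_{i\in I}$ a family of real-valued maps on $Q$ that is of type $c_0\ell_1$. Then the cardinality of the set $\{t\in Q:(F_i(t))_{i\in I}\notin c_0(I)\}$ is less than or equal to the cardinality of $I$.
   Context: $c_0(I)$ is the set of real families $(a_i)_{i\in I}$ such that $\{i:|a_i|\ge\varepsilon\}$ is finite for every $\varepsilon>0$; write $\lim_{i\in I}a_i=0$ for this. A family $(F_i)_{i\in I}$ of real-valued maps on a set $Q$ is of type $c_0\ell_1$ if one can write $F_i(t)=a_{i,t}+b_{i,t}$ for all $i\in I$, $t\in Q$, with $\lim_{i\in I}a_{i,t}=0$ for every $t\in Q$ and $\sup_{i\in I}\sum_{t\in Q}|b_{i,t}|<\infty$. *)

theory Defs
  imports "HOL-Analysis.Analysis"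
begin

definition c0_on :: "'i set \<Rightarrow> ('i \<Rightarrow> real) \<Rightarrow> bool" where
  "c0_on I a \<longleftrightarrow> (\<forall>\<epsilon>>0. finite {i\<in>I. \<bar>a i\<bar> \<ge> \<epsilon>})"

text \<open>Type c_0 l_1: F i t = a i t + b i t with (a i t)_i in c_0(I) for each t in Q and
  sup over i of sum over t in Q of |b i t| finite (the sum of nonnegative terms being the
  supremum of its finite partial sums).\<close>
definition type_c0l1 :: "'i set \<Rightarrow> 'q set \<Rightarrow> ('i \<Rightarrow> 'q \<Rightarrow> real) \<Rightarrow> bool" where
  "type_c0l1 I Q F \<longleftrightarrow>
     (\<exists>a b C. (\<forall>i\<in>I. \<forall>t\<in>Q. F i t = a i t + b i t)
        \<and> (\<forall>t\<in>Q. c0_on I (\<lambda>i. a i t))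
        \<and> (\<forall>i\<in>I. \<forall>T. finite T \<longrightarrow> T \<subseteq> Q \<longrightarrow> (\<Sum>t\<in>T. \<bar>b i t\<bar>) \<le> (C::real)))"

end

theory Submission
  imports Defs
begin

lemma fin_level:
  fixes g :: "'q \<Rightarrow> real" and Q :: "'q set"
  assumes bd: "\<And>T. finite T \<Longrightarrow> T \<subseteq> Q \<Longrightarrow> (\<Sum>t\<in>T. \<bar>g t\<bar>) \<le> C"
    and e: "e > 0"
  shows "finite {t\<in>Q. \<bar>g t\<bar> \<ge> e}"
proof (rule ccontr)
  assume inf: "infinite {t\<in>Q. \<bar>g t\<bar> \<ge> e}"
  obtain N :: nat where N: "real N > C / e" using reals_Archimedean2 by blast
  obtain T where T: "T \<subseteq> {t\<in>Q. \<bar>g t\<bar> \<ge> e}" "finite T" "card T = N"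
    using infinite_arbitrarily_large[OF inf] by blast
  have "(\<Sum>t\<in>T. e) \<le> (\<Sum>t\<in>T. \<bar>g t\<bar>)" using T by (intro sum_mono) auto
  also have "\<dots> \<le> C" using bd T by auto
  finally have "real N * e \<le> C" using T by simp
  moreover have "C < real N * e" using N e by (simp add: field_simps)
  ultimately show False by simp
qed

lemma countable_nz:
  fixes g :: "'q \<Rightarrow> real" and Q :: "'q set"
  assumes bd: "\<And>T. finite T \<Longrightarrow> T \<subseteq> Q \<Longrightarrow> (\<Sum>t\<in>T. \<bar>g t\<bar>) \<le> C"
  shows "countable {t\<in>Q. g t \<noteq> 0}"
proof -
  have "{t\<in>Q. g t \<noteq> 0} = (\<Union>n::nat. {t\<in>Q. \<bar>g t\<bar> \<ge> 1 / (real n + 1)})"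
  proof (intro equalityI subsetI)
    fix t assume t: "t \<in> {t\<in>Q. g t \<noteq> 0}"
    then have "\<bar>g t\<bar> > 0" by auto
    then obtain n :: nat where "1 / (real n + 1) < \<bar>g t\<bar>"
      by (metis add.commute nat_approx_posE of_nat_Suc)
    then show "t \<in> (\<Union>n::nat. {t\<in>Q. \<bar>g t\<bar> \<ge> 1 / (real n + 1)})" using t
      by (intro UN_I[of n]) auto
  next
    fix t assume "t \<in> (\<Union>n::nat. {t\<in>Q. \<bar>g t\<bar> \<ge> 1 / (real n + 1)})"
    then obtain n :: nat where "t \<in> Q" "\<bar>g t\<bar> \<ge> 1 / (real n + 1)" by auto
    moreover have "1 / (real n + 1) > 0" by simp
    ultimately show "t \<in> {t\<in>Q. g t \<noteq> 0}" by auto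
  qed
  moreover have "countable (\<Union>n::nat. {t\<in>Q. \<bar>g t\<bar> \<ge> 1 / (real n + 1)})"
  proof (rule countable_UN[of UNIV])
    fix n :: nat
    have "finite {t\<in>Q. \<bar>g t\<bar> \<ge> 1 / (real n + 1)}"
      by (rule fin_level[OF bd]) auto
    then show "countable {t\<in>Q. \<bar>g t\<bar> \<ge> 1 / (real n + 1)}" by (rule countable_finite)
  qed simp
  ultimately show ?thesis by simp
qed

lemma empty_ordLeq:
  assumes e: "(S::'q set) = {}" shows "(card_of S, card_of (I::'i set)) \<in> ordLeq"
  unfolding card_of_ordLeq[symmetric] using e by auto

theorem proposition2p6:
  fixes I :: "'i set" and Q :: "'q set" and F :: "'i \<Rightarrow> 'q \<Rightarrow> real"
  assumes "type_c0l1 I Q F"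
  shows "(card_of {t\<in>Q. \<not> c0_on I (\<lambda>i. F i t)}, card_of I) \<in> ordLeq"
proof -
  obtain a b C where ab: "\<forall>i\<in>I. \<forall>t\<in>Q. F i t = a i t + b i t"
    and a0: "\<forall>t\<in>Q. c0_on I (\<lambda>i. a i t)"
    and bC: "\<forall>i\<in>I. \<forall>T. finite T \<longrightarrow> T \<subseteq> Q \<longrightarrow> (\<Sum>t\<in>T. \<bar>b i t\<bar>) \<le> (C::real)"
    using assms unfolding type_c0l1_def by blast
  let ?S = "{t\<in>Q. \<not> c0_on I (\<lambda>i. F i t)}"
  show ?thesis
  proof (cases "finite I")
    case True
    then have e: "?S = {}" unfolding c0_on_def by auto
    show ?thesis by (rule empty_ordLeq[OF e])
  next
    case False
    have sub: "?S \<subseteq> (\<Union>i\<in>I. {t\<in>Q. b i t \<noteq> 0})"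
    proof
      fix t assume t: "t \<in> ?S"
      show "t \<in> (\<Union>i\<in>I. {t\<in>Q. b i t \<noteq> 0})"
      proof (rule ccontr)
        assume "t \<notin> (\<Union>i\<in>I. {t\<in>Q. b i t \<noteq> 0})"
        then have "\<forall>i\<in>I. F i t = a i t" using t ab by auto
        then have "\<And>\<epsilon>. {i\<in>I. \<bar>F i t\<bar> \<ge> \<epsilon>} = {i\<in>I. \<bar>a i t\<bar> \<ge> \<epsilon>}" by auto
        then have "c0_on I (\<lambda>i. F i t) = c0_on I (\<lambda>i. a i t)" unfolding c0_on_def
          by simp
        then show False using t a0 by auto
      qed
    qed
    have nat_I: "(card_of (UNIV::nat set), card_of I) \<in> ordLeq"
      using infinite_iff_card_of_nat[of I] False by simp
    have each: "\<forall>i\<in>I. (card_of {t\<in>Q. b i t \<noteq> 0}, card_of I) \<in> ordLeq"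
    proof
      fix i assume i: "i \<in> I"
      have "countable {t\<in>Q. b i t \<noteq> 0}"
        by (rule countable_nz[of Q "b i" C]) (use bC i in auto)
      then obtain f :: "'q \<Rightarrow> nat" where f: "inj_on f {t\<in>Q. b i t \<noteq> 0}"
        unfolding countable_def by blast
      have "(card_of {t\<in>Q. b i t \<noteq> 0}, card_of (UNIV::nat set)) \<in> ordLeq"
        by (rule card_of_ordLeq[THEN iffD1], rule exI[of _ f]) (use f in simp)
      then show "(card_of {t\<in>Q. b i t \<noteq> 0}, card_of I) \<in> ordLeq"
        by (rule ordLeq_transitive[OF _ nat_I])
    qed
    have "(card_of (\<Union>i\<in>I. {t\<in>Q. b i t \<noteq> 0}), card_of I) \<in> ordLeq"
      by (rule card_of_UNION_ordLeq_infinite[OF False ordLeq_refl each]) (rule card_of_Card_order)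
    then show ?thesis by (rule ordLeq_transitive[OF card_of_mono1[OF sub]])
  qed
qed

end
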